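(* Let $\psi:L\to\mathcal{H}_3(\mathbb{Z})$, $L\subseteq S^*$, be a Cayley automatic representation of the Heisenberg group, and let $L_H,L_{H_1},w_0,R_\varphi,R_{p_1},R_{p_2}$ be as in the context. Assume there exist FA-recognizable relations $R_0,R_1,R_2\subseteq S^*\times S^*$ such that $L_H\triangleleft R_0=R_\varphi$, $R_1\triangleright L_{H_1}=R_{p_1}$, $L_H\triangleleft R_2=R_{p_2}$, and $R_2\triangleright\{w_0\}=R_{p_2}\triangleright\{w_0\}$. Then the function $h(n)=\max\{d_A(\pi(w),\psi(w)) : w\in L,|w|\le n\}$ satisfies $\mathfrak{e}\preceq h$. In particular, $h\not\preceq f$ for every $f\in\mathfrak{F}$ with $f\prec\mathfrak{e}$.
   Context: $\mathcal{H}_3(\mathbb{Z})$ is the group of integer matrices $\begin{pmatrix}1&x&z\\0&1&y\\0&0&1\end{pmatrix}$, identified with triples $(x,y,z)\in\mathbb{Z}^3$. Let $s,p,q$ be the elements $(1,0,0),(0,1,0),(0,0,1)$; for $g=(x,y,z)$, $gs=(x+1,y,z)$, $gp=(x,y+1,x+z)$, $gq=(x,y,z+1)$. Let $A=\{e,s,p,q\}$, $S=A\cup A^{-1}$, $\pi:S^*\to\mathcal{H}_3(\mathbb{Z})$ the evaluation map, $d_A$ the word metric. $H=\{(x,0,z)\}\cong\mathbb{Z}^2$ is the subgroup generated by $s,q$, written as column vectors $[x;z]$. Endomorphisms of $H$: $\varphi([x;z])=[x;x+z]$ (matrix $\begin{pmatrix}1&0\\1&1\end{pmatrix}$), $p_1([x;z])=[x;0]$,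 $p_2([x;z])=[0;z]$. $H_1=p_1(H)=\langle s\rangle$, $H_2=p_2(H)=\langle q\rangle$. A Cayley automatic representation is a bijection $\psi:L\to G$ from a regular $L\subseteq S^*$ such that for each $a\in A$ the relation $\{(\psi^{-1}(g),\psi^{-1}(ga))\}$ is FA-recognizable, where a relation is FA-recognizable if the language of convolutions (parallel readings of the strings with shorter ones padded by a new symbol $\diamond$) is regular. Set $L_H=\psi^{-1}(H)$, $L_{H_1}=\psi^{-1}(H_1)$, $L_{H_2}=\psi^{-1}(H_2)$, $w_0=\psi^{-1}(e)$, and for $\theta\in\{\varphi,p_1,p_2\}$, $R_\theta=\{(w,\psi^{-1}(\theta(\psi(w)))) : w\in L_H\}$. For $R\subseteq S^*\times S^*$ and $X\subseteq S^*$: $X\triangleleft R=\{(u,v)\in R: u\in X\}$ and $R\triangleright X=\{(u,v)\in R: v\in X\}$. $\mathfrak{e}(n)=\exp(n)$. $\mathfrak{F}$ is the set of nondecreasing functions from some interval $[Q,\infty)\cap\mathbb{N}$ to the nonnegative reals; $g\preceq f$ means there exist $N\ge0$ and positive integers $K,M$ with $g(n)\le Kf(Mn)$ for all $n\ge N$; $g\prec f$ means $g\preceq f$ but not $f\preceq g$. *)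

theory Defs
  imports Complex_Main
begin

type_synonym heis = "int \<times> int \<times> int"

text \<open>(x,y,z) stands for the matrix [[1,x,z],[0,1,y],[0,0,1]]; matrix product.\<close>
fun hmult :: "heis \<Rightarrow> heis \<Rightarrow> heis" where
  "hmult (x, y, z) (x', y', z') = (x + x', y + y', z + z' + x * y')"

definition hone :: heis where "hone = (0, 0, 0)"

text \<open>Symbols of S = A \<union> A^{-1}, A = {e,s,p,q}; note e^{-1} = e.\<close>
datatype gen = Ge | Gs | Gp | Gq | Gs_inv | Gp_inv | Gq_inv

fun gval :: "gen \<Rightarrow> heis" where
  "gval Ge = (0, 0, 0)"
| "gval Gs = (1, 0, 0)"
| "gval Gp = (0, 1, 0)"
| "gval Gq = (0, 0, 1)"
| "gval Gs_inv = (-1, 0, 0)"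
| "gval Gp_inv = (0, -1, 0)"
| "gval Gq_inv = (0, 0, -1)"

definition heval :: "gen list \<Rightarrow> heis" where
  "heval w = foldl (\<lambda>g a. hmult g (gval a)) hone w"

definition dA :: "heis \<Rightarrow> heis \<Rightarrow> nat" where
  "dA g h = (LEAST n. \<exists>w. length w = n \<and> hmult g (heval w) = h)"

definition regular :: "'a list set \<Rightarrow> bool" where
  "regular L \<longleftrightarrow> (\<exists>(Qs :: nat set) (\<delta> :: nat \<Rightarrow> 'a \<Rightarrow> nat) q0 F.
      finite Qs \<and> q0 \<in> Qs \<and> (\<forall>q\<in>Qs. \<forall>a. \<delta> q a \<in> Qs) \<and> F \<subseteq> Qs \<and>
      L = {w. foldl \<delta> q0 w \<in> F})"

text \<open>Convolution; the padding symbol \<diamond> is None.\<close>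
definition conv :: "'a list \<Rightarrow> 'b list \<Rightarrow> ('a option \<times> 'b option) list" where
  "conv u v = map (\<lambda>i. (if i < length u then Some (u ! i) else None,
                         if i < length v then Some (v ! i) else None))
                  [0..<max (length u) (length v)]"

definition fa_rel :: "('a list \<times> 'b list) set \<Rightarrow> bool" where
  "fa_rel R \<longleftrightarrow> regular {conv u v | u v. (u, v) \<in> R}"

definition cayley_automatic :: "gen list set \<Rightarrow> (gen list \<Rightarrow> heis) \<Rightarrow> bool" where
  "cayley_automatic L \<psi> \<longleftrightarrow> regular L \<and> bij_betw \<psi> L UNIV \<and>
     (\<forall>a \<in> {Ge, Gs, Gp, Gq}.
        fa_rel {(u, v). u \<in> L \<and> v \<in> L \<and> \<psi> v = hmult (\<psi> u) (gval a)})"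

definition psi_inv :: "gen list set \<Rightarrow> (gen list \<Rightarrow> heis) \<Rightarrow> heis \<Rightarrow> gen list" where
  "psi_inv L \<psi> g = the_inv_into L \<psi> g"

definition HH :: "heis set" where "HH = {(x, 0, z) | x z. True}"
definition HH1 :: "heis set" where "HH1 = {(x, 0, 0) | x. True}"
definition HH2 :: "heis set" where "HH2 = {(0, 0, z) | z. True}"

definition LH :: "gen list set \<Rightarrow> (gen list \<Rightarrow> heis) \<Rightarrow> gen list set" where
  "LH L \<psi> = {w \<in> L. \<psi> w \<in> HH}"
definition LH1 :: "gen list set \<Rightarrow> (gen list \<Rightarrow> heis) \<Rightarrow> gen list set" where
  "LH1 L \<psi> = {w \<in> L. \<psi> w \<in> HH1}"
definition LH2 :: "gen list set \<Rightarrow> (gen list \<Rightarrow> heis) \<Rightarrow> gen list set" where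
  "LH2 L \<psi> = {w \<in> L. \<psi> w \<in> HH2}"
definition w0 :: "gen list set \<Rightarrow> (gen list \<Rightarrow> heis) \<Rightarrow> gen list" where
  "w0 L \<psi> = psi_inv L \<psi> hone"

text \<open>Endomorphisms of H ([x;z] = (x,0,z)).\<close>
fun phiH :: "heis \<Rightarrow> heis" where "phiH (x, y, z) = (x, 0, x + z)"
fun p1H :: "heis \<Rightarrow> heis" where "p1H (x, y, z) = (x, 0, 0)"
fun p2H :: "heis \<Rightarrow> heis" where "p2H (x, y, z) = (0, 0, z)"

definition Rtheta :: "gen list set \<Rightarrow> (gen list \<Rightarrow> heis) \<Rightarrow> (heis \<Rightarrow> heis)
    \<Rightarrow> (gen list \<times> gen list) set" where
  "Rtheta L \<psi> \<theta> = {(w, psi_inv L \<psi> (\<theta> (\<psi> w))) | w. w \<in> LH L \<psi>}"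

definition restrL :: "'a set \<Rightarrow> ('a \<times> 'b) set \<Rightarrow> ('a \<times> 'b) set" where
  "restrL X R = {(u, v) \<in> R. u \<in> X}"
definition restrR :: "('a \<times> 'b) set \<Rightarrow> 'b set \<Rightarrow> ('a \<times> 'b) set" where
  "restrR R X = {(u, v) \<in> R. v \<in> X}"

definition fle :: "(nat \<Rightarrow> real) \<Rightarrow> (nat \<Rightarrow> real) \<Rightarrow> bool" where
  "fle g f \<longleftrightarrow> (\<exists>N K M :: nat. K > 0 \<and> M > 0 \<and>
                   (\<forall>n \<ge> N. g n \<le> real K * f (M * n)))"

definition fless :: "(nat \<Rightarrow> real) \<Rightarrow> (nat \<Rightarrow> real) \<Rightarrow> bool" where
  "fless g f \<longleftrightarrow> fle g f \<and> \<not> fle f g"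

text \<open>The class \<frakF>: functions nondecreasing and nonnegative on some [Q,\<infinity>)\<inter>\<nat>
  (values below Q are irrelevant for fle).\<close>
definition classF :: "(nat \<Rightarrow> real) \<Rightarrow> bool" where
  "classF f \<longleftrightarrow> (\<exists>Q. (\<forall>n \<ge> Q. 0 \<le> f n) \<and> (\<forall>m n. Q \<le> m \<longrightarrow> m \<le> n \<longrightarrow> f m \<le> f n))"

definition frake :: "nat \<Rightarrow> real" where "frake n = exp (real n)"

text \<open>h(n) = max{d_A(\<pi>(w),\<psi>(w)) : w \<in> L, |w| \<le> n}; set to 0 when the set is empty.\<close>
definition hfun :: "gen list set \<Rightarrow> (gen list \<Rightarrow> heis) \<Rightarrow> nat \<Rightarrow> real" where
  "hfun L \<psi> n = real (Max (insert 0 {dA (heval w) (\<psi> w) | w. w \<in> L \<and> length w \<le> n}))"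

end

theory Submission
  imports Defs
begin


definition cutl :: "nat \<Rightarrow> nat \<Rightarrow> 'a list \<Rightarrow> 'a list" where
  "cutl i j x = (if j \<le> length x then take i x @ drop j x else x)"

lemma conv_len: "length (conv u v) = max (length u) (length v)"
  by (simp add: conv_def)

lemma conv_nth: "i < length (conv u v) \<Longrightarrow> conv u v ! i =
   (if i < length u then Some (u ! i) else None, if i < length v then Some (v ! i) else None)"
  by (simp add: conv_def)

lemma conv_inj: assumes "conv u v = conv u' v'" shows "u = u' \<and> v = v'"
proof -
  have L: "max (length u) (length v) = max (length u') (length v')"
    using assms conv_len by metis
  have fu: "length u = length u'"
  proof (rule ccontr)
    assume "length u \<noteq> length u'"
    then consider "length u < length u'" | "length u' < length u" by linarith
    then show False
    proof cases
      case 1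
      let ?i = "length u"
      have ii: "?i < length (conv u v)" using 1 L conv_len by (metis max.strict_coboundedI1 max.strict_order_iff)
      then have "fst (conv u v ! ?i) = None" by (simp add: conv_nth)
      moreover have "fst (conv u' v' ! ?i) = Some (u' ! ?i)" using 1 ii assms by (simp add: conv_nth)
      ultimately show False using assms by simp
    next
      case 2
      let ?i = "length u'"
      have ii: "?i < length (conv u' v')" using 2 L conv_len by (metis max.strict_coboundedI1 max.strict_order_iff)
      then have n: "fst (conv u' v' ! ?i) = None" by (simp add: conv_nth)
      have ii2: "?i < length (conv u v)" using ii assms by simp
      have m: "fst (conv u v ! ?i) = Some (u ! ?i)" using 2 ii2 by (simp add: conv_nth)
      show False using n m assms by (metis option.distinct(1))
    qed
  qed
  have fv: "length v = length v'"
  proof (rule ccontr)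
    assume "length v \<noteq> length v'"
    then consider "length v < length v'" | "length v' < length v" by linarith
    then show False
    proof cases
      case 1
      let ?i = "length v"
      have ii: "?i < length (conv u v)" using 1 L conv_len by (metis max.strict_coboundedI2 max.strict_order_iff)
      then have "snd (conv u v ! ?i) = None" by (simp add: conv_nth)
      moreover have "snd (conv u' v' ! ?i) = Some (v' ! ?i)" using 1 ii assms by (simp add: conv_nth)
      ultimately show False using assms by simp
    next
      case 2
      let ?i = "length v'"
      have ii: "?i < length (conv u' v')" using 2 L conv_len by (metis max.strict_coboundedI2 max.strict_order_iff)
      then have n: "snd (conv u' v' ! ?i) = None" by (simp add: conv_nth)
      have ii2: "?i < length (conv u v)" using ii assms by simp
      have m: "snd (conv u v ! ?i) = Some (v ! ?i)" using 2 ii2 by (simp add: conv_nth)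
      show False using n m assms by (metis option.distinct(1))
    qed
  qed
  have "u = u'"
  proof (rule nth_equalityI)
    show "length u = length u'" by (rule fu)
    fix i assume "i < length u"
    then have i: "i < length (conv u v)" by (simp add: conv_len)
    have "fst (conv u v ! i) = Some (u ! i)" using i \<open>i < length u\<close> by (simp add: conv_nth)
    moreover have "fst (conv u' v' ! i) = Some (u' ! i)" using i \<open>i < length u\<close> fu assms by (simp add: conv_nth)
    ultimately show "u ! i = u' ! i" using assms by simp
  qed
  moreover have "v = v'"
  proof (rule nth_equalityI)
    show "length v = length v'" by (rule fv)
    fix i assume "i < length v"
    then have i: "i < length (conv u v)" by (simp add: conv_len)
    have "snd (conv u v ! i) = Some (v ! i)" using i \<open>i < length v\<close> by (simp add: conv_nth)
    moreover have "snd (conv u' v' ! i) = Some (v' ! i)" using i \<open>i < length v\<close> fv assms by (simp add: conv_nth)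
    ultimately show "v ! i = v' ! i" using assms by simp
  qed
  ultimately show ?thesis by simp
qed

lemma cutl_short: "length x < j \<Longrightarrow> cutl i j x = x" by (simp add: cutl_def)

lemma cutl_len: "i \<le> j \<Longrightarrow> j \<le> length x \<Longrightarrow> length (cutl i j x) = length x - (j - i)"
  by (simp add: cutl_def)

lemma cutl_conv:
  assumes ij: "i < j" and hu: "length u \<le> i \<or> j \<le> length u" and hv: "length v \<le> i \<or> j \<le> length v"
  shows "conv (cutl i j u) (cutl i j v) = cutl i j (conv u v)"
proof (cases "j \<le> length u \<or> j \<le> length v")
  case False
  then show ?thesis using ij by (auto simp add: cutl_def conv_len max_def)
next
  case True
  have Lc: "j \<le> length (conv u v)" using True by (auto simp: conv_len)
  have lu: "length (cutl i j u) = (if j \<le> length u then length u - (j - i) else length u)"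
    using ij by (simp add: cutl_def min_def add.commute)
  have lv: "length (cutl i j v) = (if j \<le> length v then length v - (j - i) else length v)"
    using ij by (simp add: cutl_def min_def add.commute)
  show ?thesis
  proof (rule nth_equalityI)
    show "length (conv (cutl i j u) (cutl i j v)) = length (cutl i j (conv u v))"
      using Lc True hu hv ij by (cases "j \<le> length u"; cases "j \<le> length v"; simp add: conv_len lu lv cutl_def min_def max_def; arith)
    fix p assume p: "p < length (conv (cutl i j u) (cutl i j v))"
    have R: "cutl i j (conv u v) ! p = conv u v ! (if p < i then p else p + (j - i))"
      using Lc ij p by (auto simp: cutl_def nth_append conv_len lu lv split: if_splits) (metis add.commute)+
    have cu: "(if p < length (cutl i j u) then Some (cutl i j u ! p) else None)
       = (if (if p < i then p else p + (j - i)) < length u then Some (u ! (if p < i then p else p + (j - i))) else None)"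
      using hu ij by (auto simp: cutl_def nth_append min_def) (metis add.commute)+
    have cv: "(if p < length (cutl i j v) then Some (cutl i j v ! p) else None)
       = (if (if p < i then p else p + (j - i)) < length v then Some (v ! (if p < i then p else p + (j - i))) else None)"
      using hv ij by (auto simp: cutl_def nth_append min_def) (metis add.commute)+
    have q: "(if p < i then p else p + (j - i)) < length (conv u v)"
      using p Lc ij True hu hv by (auto simp: conv_len lu lv max_def split: if_splits)
    show "conv (cutl i j u) (cutl i j v) ! p = cutl i j (conv u v) ! p"
      using p q R cu cv by (simp add: conv_nth del: conv_len)
  qed
qed

lemma foldl_cutl:
  assumes "i \<le> j" "foldl \<delta> q (take i x) = foldl \<delta> q (take j x)"
  shows "foldl \<delta> q (cutl i j x) = foldl \<delta> q x"
proof (cases "j \<le> length x")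
  case True
  have "foldl \<delta> q x = foldl \<delta> (foldl \<delta> q (take j x)) (drop j x)"
    by (metis append_take_drop_id foldl_append)
  then show ?thesis using assms True by (simp add: cutl_def)
qed (simp add: cutl_def)

lemma foldl_closed: "q \<in> Qs \<Longrightarrow> \<forall>q\<in>Qs. \<forall>a. \<delta> q a \<in> Qs \<Longrightarrow> foldl \<delta> q w \<in> Qs"
  by (induction w arbitrary: q) auto

lemma pigeon:
  assumes "finite S" "\<forall>t\<in>{lo..lo + card S}. f t \<in> S"
  shows "\<exists>i j. lo \<le> i \<and> i < j \<and> j \<le> lo + card S \<and> f i = f j"
proof (rule ccontr)
  assume H: "\<not> ?thesis"
  have "inj_on f {lo..lo + card S}"
  proof (rule inj_onI)
    fix a b assume a: "a \<in> {lo..lo + card S}" and b: "b \<in> {lo..lo + card S}" and e: "f a = f b"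
    show "a = b"
    proof (rule ccontr)
      assume "a \<noteq> b"
      then consider "a < b" | "b < a" by linarith
      then show False using H a b e by cases (auto, metis)
    qed
  qed
  then have "card {lo..lo + card S} \<le> card S"
    using card_inj_on_le assms by (metis image_subsetI)
  then show False by simp
qed



lemma fa_rel_dfa:
  assumes "fa_rel R"
  shows "\<exists>(Qs :: nat set) \<delta> q0 F. finite Qs \<and> q0 \<in> Qs \<and> (\<forall>q\<in>Qs. \<forall>a. \<delta> q a \<in> Qs) \<and>
    (\<forall>u v. (u, v) \<in> R \<longleftrightarrow> foldl \<delta> q0 (conv u v) \<in> F)"
proof -
  have "\<exists>(Qs :: nat set) \<delta> q0 F. finite Qs \<and> q0 \<in> Qs \<and> (\<forall>q\<in>Qs. \<forall>a. \<delta> q a \<in> Qs) \<and> F \<subseteq> Qs \<and>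
    {conv u v | u v. (u, v) \<in> R} = {w. foldl \<delta> q0 w \<in> F}"
    using assms unfolding fa_rel_def regular_def .
  then obtain Qs :: "nat set" and \<delta> q0 F where h: "finite Qs" "q0 \<in> Qs" "\<forall>q\<in>Qs. \<forall>a. \<delta> q a \<in> Qs"
    "{conv u v | u v. (u, v) \<in> R} = {w. foldl \<delta> q0 w \<in> F}"
    by (elim exE conjE) simp
  have "(u, v) \<in> R \<longleftrightarrow> foldl \<delta> q0 (conv u v) \<in> F" for u v
  proof
    assume "(u, v) \<in> R"
    then have "conv u v \<in> {conv u v | u v. (u, v) \<in> R}" by blast
    then show "foldl \<delta> q0 (conv u v) \<in> F" using h(4) by simp
  next
    assume "foldl \<delta> q0 (conv u v) \<in> F"
    then have "conv u v \<in> {conv u v | u v. (u, v) \<in> R}" using h(4) by simp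
    then obtain u' v' where "conv u v = conv u' v'" "(u', v') \<in> R" by blast
    then show "(u, v) \<in> R" using conv_inj by metis
  qed
  then show ?thesis using h(1-3) by (intro exI[of _ Qs] exI[of _ \<delta>] exI[of _ q0] exI[of _ F]) auto
qed

lemma fwd_bound:
  assumes "fa_rel R"
  shows "\<exists>k. \<forall>u v. (u, v) \<in> R \<and> (\<forall>v'. (u, v') \<in> R \<longrightarrow> v' = v) \<longrightarrow> length v \<le> length u + k"
proof -
  obtain Qs :: "nat set" and \<delta> q0 F where H: "finite Qs \<and> q0 \<in> Qs \<and> (\<forall>q\<in>Qs. \<forall>a. \<delta> q a \<in> Qs) \<and>
    (\<forall>u v. (u, v) \<in> R \<longleftrightarrow> foldl \<delta> q0 (conv u v) \<in> F)"
    using fa_rel_dfa[OF assms] by (elim exE) (erule that)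
  then have fin: "finite Qs" and q0: "q0 \<in> Qs" and cl: "\<forall>q\<in>Qs. \<forall>a. \<delta> q a \<in> Qs"
     and mem0: "\<forall>u v. (u, v) \<in> R \<longleftrightarrow> foldl \<delta> q0 (conv u v) \<in> F" by auto
  have mem: "(u, v) \<in> R \<longleftrightarrow> foldl \<delta> q0 (conv u v) \<in> F" for u v using mem0 by blast
  have "length v \<le> length u + card Qs" if uv: "(u, v) \<in> R" and un: "\<forall>v'. (u, v') \<in> R \<longrightarrow> v' = v" for u v
  proof (rule ccontr)
    assume "\<not> ?thesis"
    then have lv: "length u + card Qs < length v" by simp
    define f where "f t = foldl \<delta> q0 (take t (conv u v))" for t
    have fQ: "\<forall>t\<in>{length u..length u + card Qs}. f t \<in> Qs" using foldl_closed[OF q0 cl] by (simp add: f_def)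
    have "\<exists>i j. length u \<le> i \<and> i < j \<and> j \<le> length u + card Qs \<and> f i = f j"
      by (rule pigeon[OF fin fQ])
    then obtain i j where ij: "length u \<le> i" "i < j" "j \<le> length u + card Qs" "f i = f j"
      by blast
    have cu: "cutl i j u = u" using ij by (simp add: cutl_short)
    have "conv (cutl i j u) (cutl i j v) = cutl i j (conv u v)"
      using ij lv by (intro cutl_conv) auto
    then have c: "conv u (cutl i j v) = cutl i j (conv u v)" using cu by simp
    have "foldl \<delta> q0 (cutl i j (conv u v)) = foldl \<delta> q0 (conv u v)"
      using ij f_def by (intro foldl_cutl) auto
    then have "(u, cutl i j v) \<in> R" using uv mem c by simp
    then have "cutl i j v = v" using un by blast
    moreover have "length (cutl i j v) < length v" using ij lv by (simp add: cutl_len)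
    ultimately show False by simp
  qed
  then show ?thesis by blast
qed


lemma hmult_assoc: "hmult (hmult a b) c = hmult a (hmult b c)"
  by (cases a; cases b; cases c) (simp add: algebra_simps)

lemma hone_mult[simp]: "hmult hone a = a" by (cases a) (simp add: hone_def)
lemma mult_hone[simp]: "hmult a hone = a" by (cases a) (simp add: hone_def)

lemma foldl_h: "foldl (\<lambda>g a. hmult g (gval a)) g0 w = hmult g0 (foldl (\<lambda>g a. hmult g (gval a)) hone w)"
proof (induction w arbitrary: g0)
  case Nil then show ?case by simp
next
  case (Cons a w)
  show ?case using Cons[of "hmult g0 (gval a)"] Cons[of "gval a"] by (simp add: hmult_assoc)
qed

lemma heval_Nil[simp]: "heval [] = hone" by (simp add: heval_def)
lemma heval_Cons: "heval (a # w) = hmult (gval a) (heval w)"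
  unfolding heval_def using foldl_h[of "gval a" w] by simp
lemma heval_append: "heval (u @ v) = hmult (heval u) (heval v)"
  by (induction u) (simp_all add: heval_Cons hmult_assoc)

lemma fst_hmult: "fst (hmult a b) = fst a + fst b" by (cases a; cases b) simp

lemma fst_heval: "\<bar>fst (heval w)\<bar> \<le> int (length w)"
proof (induction w)
  case Nil then show ?case by (simp add: hone_def)
next
  case (Cons a w)
  have "\<bar>fst (gval a)\<bar> \<le> 1" by (cases a) auto
  then show ?case using Cons by (simp add: heval_Cons fst_hmult)
qed

lemma rep_Gs: "heval (replicate n Gs) = (int n, 0, 0)"
  by (induction n) (simp_all add: heval_Cons hone_def)
lemma rep_Gsi: "heval (replicate n Gs_inv) = (- int n, 0, 0)"
  by (induction n) (simp_all add: heval_Cons hone_def)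
lemma rep_Gp: "heval (replicate n Gp) = (0, int n, 0)"
  by (induction n) (simp_all add: heval_Cons hone_def)
lemma rep_Gpi: "heval (replicate n Gp_inv) = (0, - int n, 0)"
  by (induction n) (simp_all add: heval_Cons hone_def)
lemma rep_Gq: "heval (replicate n Gq) = (0, 0, int n)"
  by (induction n) (simp_all add: heval_Cons hone_def)
lemma rep_Gqi: "heval (replicate n Gq_inv) = (0, 0, - int n)"
  by (induction n) (simp_all add: heval_Cons hone_def)

lemma word_x: "\<exists>w. heval w = (x, 0, 0)"
proof (cases "x \<ge> 0")
  case True then show ?thesis using rep_Gs[of "nat x"] by auto
next
  case False then show ?thesis using rep_Gsi[of "nat (-x)"] by auto
qed
lemma word_y: "\<exists>w. heval w = (0, y, 0)"
proof (cases "y \<ge> 0")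
  case True then show ?thesis using rep_Gp[of "nat y"] by auto
next
  case False then show ?thesis using rep_Gpi[of "nat (-y)"] by auto
qed
lemma word_z: "\<exists>w. heval w = (0, 0, z)"
proof (cases "z \<ge> 0")
  case True then show ?thesis using rep_Gq[of "nat z"] by auto
next
  case False then show ?thesis using rep_Gqi[of "nat (-z)"] by auto
qed

lemma word_any: "\<exists>w. heval w = d"
proof -
  obtain a b c where d: "d = (a, b, c)" by (cases d)
  obtain w1 w2 w3 where "heval w1 = (a, 0, 0)" "heval w2 = (0, b, 0)" "heval w3 = (0, 0, c - a * b)"
    using word_x word_y word_z by metis
  then have "heval (w1 @ w2 @ w3) = d" by (simp add: heval_append d)
  then show ?thesis by blast
qed

lemma dA_ex: "\<exists>w. hmult g (heval w) = h"
proof -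
  obtain a b c where g: "g = (a, b, c)" by (cases g)
  define gi where "gi = (-a, -b, a * b - c)"
  have "hmult g gi = hone" by (simp add: g gi_def hone_def)
  obtain w where "heval w = hmult gi h" using word_any by blast
  then have "hmult g (heval w) = h" using \<open>hmult g gi = hone\<close> by (simp flip: hmult_assoc)
  then show ?thesis by blast
qed

lemma dA_lower: "\<bar>fst h - fst g\<bar> \<le> int (dA g h)"
proof -
  have "\<exists>n w. length w = n \<and> hmult g (heval w) = h" using dA_ex by blast
  then have "\<exists>w. length w = dA g h \<and> hmult g (heval w) = h"
    unfolding dA_def by (rule LeastI_ex)
  then obtain w where w: "length w = dA g h" "hmult g (heval w) = h" by blast
  then have "fst h = fst g + fst (heval w)" by (metis fst_hmult)
  then show ?thesis using fst_heval[of w] w(1) by simp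
qed

lemma UNIV_gen: "(UNIV :: gen set) = {Ge, Gs, Gp, Gq, Gs_inv, Gp_inv, Gq_inv}"
  by (auto, case_tac x, auto)

lemma hfun_ge:
  assumes "w \<in> L" "length w \<le> m"
  shows "real (dA (heval w) (\<psi> w)) \<le> hfun L \<psi> m"
proof -
  have "{dA (heval w) (\<psi> w) | w. w \<in> L \<and> length w \<le> m} \<subseteq>
        (\<lambda>w. dA (heval w) (\<psi> w)) ` {w. set w \<subseteq> UNIV \<and> length w \<le> m}" by blast
  moreover have "finite {w :: gen list. set w \<subseteq> UNIV \<and> length w \<le> m}"
    by (rule finite_lists_length_le) (simp add: UNIV_gen)
  ultimately have "finite {dA (heval w) (\<psi> w) | w. w \<in> L \<and> length w \<le> m}"
    by (meson finite_imageI finite_subset)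
  then have "dA (heval w) (\<psi> w) \<le> Max (insert 0 {dA (heval w) (\<psi> w) | w. w \<in> L \<and> length w \<le> m})"
    using assms by (intro Max_ge) auto
  then show ?thesis unfolding hfun_def by simp
qed



lemma fle_trans: assumes "fle g h" "fle h f" shows "fle g f"
proof -
  obtain N1 K1 M1 :: nat where 1: "K1 > 0" "M1 > 0" "\<forall>n\<ge>N1. g n \<le> real K1 * h (M1 * n)"
    using assms(1) unfolding fle_def by blast
  obtain N2 K2 M2 :: nat where 2: "K2 > 0" "M2 > 0" "\<forall>n\<ge>N2. h n \<le> real K2 * f (M2 * n)"
    using assms(2) unfolding fle_def by blast
  have "g n \<le> real (K1 * K2) * f ((M2 * M1) * n)" if "n \<ge> max N1 N2" for n
  proof -
    have "M1 * n \<ge> N2" using that 1(2) by (metis dual_order.trans le_add2 max.boundedE mult_le_mono1 mult_numeral_1 nat_mult_1 not_less_eq_eq numeral_One One_nat_def Suc_leI)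
    then have "h (M1 * n) \<le> real K2 * f (M2 * (M1 * n))" using 2 by blast
    then have "real K1 * h (M1 * n) \<le> real K1 * (real K2 * f (M2 * (M1 * n)))"
      by (intro mult_left_mono) auto
    moreover have "g n \<le> real K1 * h (M1 * n)" using 1 that by auto
    ultimately show ?thesis by (simp add: mult.assoc)
  qed
  then show ?thesis unfolding fle_def using 1 2
    by (intro exI[of _ "max N1 N2"] exI[of _ "K1 * K2"] exI[of _ "M2 * M1"]) auto
qed

lemma pow_bound:
  fixes c0 D n :: nat
  assumes "2 * c0 + 4 * D + 1 \<le> n"
  shows "2 * c0 + 4 * n * D \<le> 4 ^ n"
proof -
  have a: "n + 1 \<le> 2 ^ n" by (metis Suc_eq_plus1 Suc_leI less_exp)
  have "(n + 1) * (n + 1) \<le> 2 ^ n * 2 ^ n" using a mult_le_mono by blast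
  also have "\<dots> = 4 ^ n" by (metis power_mult_distrib numeral_times_numeral semiring_norm(12) num_double)
  finally have b: "(n + 1) * (n + 1) \<le> 4 ^ n" .
  have "2 * c0 + 4 * n * D \<le> (2 * c0 + 4 * D + 1) * n" using assms by (simp add: algebra_simps)
  also have "\<dots> \<le> (n + 1) * (n + 1)" using assms by (intro mult_le_mono) auto
  finally show ?thesis using b by linarith
qed

theorem mainTheorem12:
  fixes L :: "gen list set" and \<psi> :: "gen list \<Rightarrow> heis"
  assumes "cayley_automatic L \<psi>"
    and "\<exists>R0 R1 R2 :: (gen list \<times> gen list) set.
           fa_rel R0 \<and> fa_rel R1 \<and> fa_rel R2 \<and>
           restrL (LH L \<psi>) R0 = Rtheta L \<psi> phiH \<and>
           restrR R1 (LH1 L \<psi>) = Rtheta L \<psi> p1H \<and>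
           restrL (LH L \<psi>) R2 = Rtheta L \<psi> p2H \<and>
           restrR R2 {w0 L \<psi>} = restrR (Rtheta L \<psi> p2H) {w0 L \<psi>}"
  shows "fle frake (hfun L \<psi>) \<and>
         (\<forall>f. classF f \<and> fless f frake \<longrightarrow> \<not> fle (hfun L \<psi>) f)"
proof -
  from assms(1) have bij: "bij_betw \<psi> L UNIV" by (simp add: cayley_automatic_def)
  hence inj: "inj_on \<psi> L" and sur: "\<psi> ` L = UNIV" by (auto simp: bij_betw_def)
  define rep where "rep = psi_inv L \<psi>"
  have rep_in: "rep g \<in> L" for g
    unfolding rep_def psi_inv_def using the_inv_into_into[OF inj, of g L] sur by simp
  have psi_rep: "\<psi> (rep g) = g" for g
    unfolding rep_def psi_inv_def using f_the_inv_into_f[OF inj, of g] sur by simp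
  have rep_psi: "rep (\<psi> w) = w" if "w \<in> L" for w
    unfolding rep_def psi_inv_def using the_inv_into_f_f[OF inj that] .
  have rep_inj: "g = g'" if "rep g = rep g'" for g g' by (metis psi_rep that)
  have repH: "rep (x, 0, z) \<in> LH L \<psi>" for x z using rep_in psi_rep by (simp add: LH_def HH_def)
  have Rth: "(u, v) \<in> Rtheta L \<psi> \<theta> \<longleftrightarrow> u \<in> LH L \<psi> \<and> v = rep (\<theta> (\<psi> u))" for u v \<theta>
    by (auto simp: Rtheta_def rep_def)
  obtain R0 R1 R2 where fa0: "fa_rel R0" and fa2: "fa_rel R2"
    and e0: "restrL (LH L \<psi>) R0 = Rtheta L \<psi> phiH"
    and e2: "restrL (LH L \<psi>) R2 = Rtheta L \<psi> p2H"
    and e3: "restrR R2 {w0 L \<psi>} = restrR (Rtheta L \<psi> p2H) {w0 L \<psi>}"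
    using assms(2) by blast
  have in0: "(u, v) \<in> R0 \<longleftrightarrow> v = rep (phiH (\<psi> u))" if "u \<in> LH L \<psi>" for u v
  proof -
    have "(u, v) \<in> R0 \<longleftrightarrow> (u, v) \<in> restrL (LH L \<psi>) R0" using that by (simp add: restrL_def)
    then show ?thesis using e0 Rth that by simp
  qed
  have in2: "(u, v) \<in> R2 \<longleftrightarrow> v = rep (p2H (\<psi> u))" if "u \<in> LH L \<psi>" for u v
  proof -
    have "(u, v) \<in> R2 \<longleftrightarrow> (u, v) \<in> restrL (LH L \<psi>) R2" using that by (simp add: restrL_def)
    then show ?thesis using e2 Rth that by simp
  qed
  have w0: "w0 L \<psi> = rep hone" by (simp add: w0_def rep_def)

  obtain k0 where k0: "\<forall>u v. (u, v) \<in> R0 \<and> (\<forall>v'. (u, v') \<in> R0 \<longrightarrow> v' = v) \<longrightarrow> length v \<le> length u + k0"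
    using fwd_bound[OF fa0] by blast
  have F0: "length (rep (x, 0, x + z)) \<le> length (rep (x, 0, z)) + k0" for x z
  proof -
    have u: "rep (x, 0, z) \<in> LH L \<psi>" by (rule repH)
    have "phiH (\<psi> (rep (x, 0, z))) = (x, 0, x + z)" by (simp add: psi_rep)
    then have "(rep (x, 0, z), rep (x, 0, x + z)) \<in> R0"
      and "\<forall>v'. (rep (x, 0, z), v') \<in> R0 \<longrightarrow> v' = rep (x, 0, x + z)" using in0[OF u] by auto
    then show ?thesis using k0 by blast
  qed
  obtain k2 where k2: "\<forall>u v. (u, v) \<in> R2 \<and> (\<forall>v'. (u, v') \<in> R2 \<longrightarrow> v' = v) \<longrightarrow> length v \<le> length u + k2"
    using fwd_bound[OF fa2] by blast
  have F2: "length (rep (0, 0, z)) \<le> length (rep (x, 0, z)) + k2" for x z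
  proof -
    have u: "rep (x, 0, z) \<in> LH L \<psi>" by (rule repH)
    have "p2H (\<psi> (rep (x, 0, z))) = (0, 0, z)" by (simp add: psi_rep)
    then have "(rep (x, 0, z), rep (0, 0, z)) \<in> R2"
      and "\<forall>v'. (rep (x, 0, z), v') \<in> R2 \<longrightarrow> v' = rep (0, 0, z)" using in2[OF u] by auto
    then show ?thesis using k2 by blast
  qed

  obtain Q0 :: "nat set" and d0 s0 G0 where H0: "finite Q0 \<and> s0 \<in> Q0 \<and> (\<forall>q\<in>Q0. \<forall>a. d0 q a \<in> Q0) \<and>
    (\<forall>u v. (u, v) \<in> R0 \<longleftrightarrow> foldl d0 s0 (conv u v) \<in> G0)"
    using fa_rel_dfa[OF fa0] by (elim exE) (erule that)
  obtain Q2 :: "nat set" and d2 s2 G2 where H2: "finite Q2 \<and> s2 \<in> Q2 \<and> (\<forall>q\<in>Q2. \<forall>a. d2 q a \<in> Q2) \<and>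
    (\<forall>u v. (u, v) \<in> R2 \<longleftrightarrow> foldl d2 s2 (conv u v) \<in> G2)"
    using fa_rel_dfa[OF fa2] by (elim exE) (erule that)
  define S where "S = Q0 \<times> Q2 \<times> Q2"
  have finS: "finite S" using H0 H2 by (simp add: S_def)
  define N where "N = card S"

  have Inv: "length (rep (y, 0, 0)) \<le> max (length (rep (0, 0, y))) (length (rep hone)) + 2 * N" for y
  proof (rule ccontr)
    define A where "A = rep (y, 0, 0)"
    define C where "C = rep (y, 0, y)"
    define B where "B = rep (0, 0, y)"
    define W where "W = rep hone"
    define m where "m = max (length B) (length W)"
    assume "\<not> ?thesis"
    then have lA: "m + 2 * N < length A" by (simp add: A_def B_def W_def m_def)
    have AC: "(A, C) \<in> R0" unfolding A_def C_def using in0[OF repH] by (simp add: psi_rep)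
    have CB: "(C, B) \<in> R2" unfolding C_def B_def using in2[OF repH] by (simp add: psi_rep)
    have AW: "(A, W) \<in> R2" unfolding A_def W_def using in2[OF repH] by (simp add: psi_rep hone_def)
    obtain lo where lo: "m \<le> lo" "lo + N < length A" "length C \<le> lo \<or> lo + N \<le> length C"
    proof (cases "length C < m + N")
      case True
      then show ?thesis using that[of "max m (length C)"] lA by auto
    next
      case False
      then show ?thesis using that[of m] lA by auto
    qed
    define f where "f t = (foldl d0 s0 (take t (conv A C)), foldl d2 s2 (take t (conv C B)),
                          foldl d2 s2 (take t (conv A W)))" for t
    have fQ: "\<forall>t\<in>{lo..lo + card S}. f t \<in> S"
      using foldl_closed[of s0 Q0 d0] foldl_closed[of s2 Q2 d2] H0 H2 by (simp add: f_def S_def)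
    have "\<exists>i j. lo \<le> i \<and> i < j \<and> j \<le> lo + card S \<and> f i = f j"
      by (rule pigeon[OF finS fQ])
    then obtain i j where ij: "lo \<le> i" "i < j" "j \<le> lo + N" "f i = f j"
      unfolding N_def by blast
    have lB: "length B \<le> i" and lW: "length W \<le> i" using ij lo unfolding m_def by auto
    have cB: "cutl i j B = B" using lB ij by (simp add: cutl_short)
    have cW: "cutl i j W = W" using lW ij by (simp add: cutl_short)
    have hA: "length A \<le> i \<or> j \<le> length A" using ij lo by auto
    have hC: "length C \<le> i \<or> j \<le> length C" using ij lo by auto
    define A' where "A' = cutl i j A"
    define C' where "C' = cutl i j C"
    have c1: "conv A' C' = cutl i j (conv A C)" unfolding A'_def C'_def using ij hA hC by (intro cutl_conv) auto
    have c2: "conv C' B = cutl i j (conv C B)" unfolding C'_def using ij hC lB cutl_conv[of i j C B] cB by auto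
    have c3: "conv A' W = cutl i j (conv A W)" unfolding A'_def using ij hA lW cutl_conv[of i j A W] cW by auto
    have f1: "foldl d0 s0 (cutl i j (conv A C)) = foldl d0 s0 (conv A C)"
      using ij by (intro foldl_cutl) (auto simp: f_def)
    have f2: "foldl d2 s2 (cutl i j (conv C B)) = foldl d2 s2 (conv C B)"
      using ij by (intro foldl_cutl) (auto simp: f_def)
    have f3: "foldl d2 s2 (cutl i j (conv A W)) = foldl d2 s2 (conv A W)"
      using ij by (intro foldl_cutl) (auto simp: f_def)
    have AC': "(A', C') \<in> R0" using AC H0 c1 f1 by simp
    have CB': "(C', B) \<in> R2" using CB H2 c2 f2 by simp
    have AW': "(A', W) \<in> R2" using AW H2 c3 f3 by simp
    have "(A', W) \<in> restrR R2 {w0 L \<psi>}" using AW' w0 W_def by (simp add: restrR_def)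
    then have "(A', W) \<in> restrR (Rtheta L \<psi> p2H) {w0 L \<psi>}" using e3 by simp
    then have "(A', W) \<in> Rtheta L \<psi> p2H" unfolding restrR_def by blast
    then have A'H: "A' \<in> LH L \<psi>" and "W = rep (p2H (\<psi> A'))" using Rth by auto
    then have p2A: "p2H (\<psi> A') = hone" using rep_inj W_def by metis
    obtain x' z' where psA: "\<psi> A' = (x', 0, z')" using A'H by (auto simp: LH_def HH_def)
    have z0: "z' = 0" using p2A psA by (simp add: hone_def)
    have "C' = rep (x', 0, x')" using in0[OF A'H] AC' psA z0 by simp
    then have "(C', B) \<in> R2 \<longleftrightarrow> B = rep (0, 0, x')" using in2[OF repH] psi_rep by simp
    then have "rep (0, 0, y) = rep (0, 0, x')" using CB' B_def by simp
    then have "x' = y" using rep_inj by blast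
    then have "\<psi> A' = \<psi> A" using psA z0 A_def psi_rep by simp
    moreover have "A' \<in> L" using A'H by (simp add: LH_def)
    moreover have "A \<in> L" using A_def rep_in by simp
    ultimately have "A' = A" using rep_psi by metis
    moreover have "length A' < length A" unfolding A'_def using ij lo by (simp add: cutl_len)
    ultimately show False by simp
  qed
  define Ci where "Ci = length (rep hone) + 2 * N"
  have Inv2: "length (rep (y, 0, 0)) \<le> length (rep (0, 0, y)) + Ci" for y
    using Inv[of y] unfolding Ci_def by linarith
  define D where "D = 2 * k0 + k2 + Ci"
  have step: "length (rep (X + X, 0, 0)) \<le> length (rep (X, 0, 0)) + D" for X
    using F0[of X 0] F0[of X X] F2[of "X + X" X] Inv2[of "X + X"] unfolding D_def by simp
  define c0 where "c0 = length (rep (1, 0, 0))"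
  have pw: "length (rep (2 ^ n, 0, 0)) \<le> c0 + n * D" for n
  proof (induction n)
    case 0 then show ?case by (simp add: c0_def)
  next
    case (Suc n)
    have "(2::int) ^ Suc n = 2 ^ n + 2 ^ n" by simp
    then show ?case using step[of "2 ^ n"] Suc by simp
  qed
  have low: "real_of_int (2 ^ n) - real (c0 + n * D) \<le> hfun L \<psi> mm" if "c0 + n * D \<le> mm" for n mm
  proof -
    define a where "a = rep (2 ^ n, 0, 0)"
    have la: "length a \<le> c0 + n * D" using pw a_def by simp
    have "real (dA (heval a) (\<psi> a)) \<le> hfun L \<psi> mm"
      using hfun_ge[of a L mm \<psi>] rep_in a_def la that by simp
    moreover have "\<bar>fst (\<psi> a) - fst (heval a)\<bar> \<le> int (dA (heval a) (\<psi> a))" by (rule dA_lower)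
    moreover have "fst (\<psi> a) = 2 ^ n" using a_def psi_rep by simp
    moreover have "\<bar>fst (heval a)\<bar> \<le> int (length a)" by (rule fst_heval)
    ultimately have "(2::int) ^ n - int (c0 + n * D) \<le> int (dA (heval a) (\<psi> a))" using la by linarith
    then have "real_of_int ((2::int) ^ n - int (c0 + n * D)) \<le> real (dA (heval a) (\<psi> a))"
      by (metis of_int_le_iff of_int_of_nat_eq)
    then show ?thesis using \<open>real (dA (heval a) (\<psi> a)) \<le> hfun L \<psi> mm\<close> by simp
  qed
  define MM where "MM = c0 + 2 * D + 1"
  define N0 where "N0 = 2 * c0 + 4 * D + 1"
  have main: "frake n \<le> real 2 * hfun L \<psi> (MM * n)" if "n \<ge> N0" for n
  proof -
    have n1: "n \<ge> 1" using that N0_def by simp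
    have c0n: "c0 \<le> c0 * n" using n1 by simp
    have e: "MM * n = c0 * n + (2 * n) * D + n" by (simp add: MM_def algebra_simps)
    have "c0 + (2 * n) * D \<le> MM * n" using c0n e by linarith
    then have h: "real_of_int (2 ^ (2 * n)) - real (c0 + (2 * n) * D) \<le> hfun L \<psi> (MM * n)" by (rule low)
    have "(2::int) ^ (2 * n) = 4 ^ n" by (simp add: power_mult)
    then have h': "real (4 ^ n) - real (c0 + (2 * n) * D) \<le> hfun L \<psi> (MM * n)" using h by simp
    have pb: "2 * c0 + 4 * n * D \<le> 4 ^ n" using pow_bound[of c0 D n] that N0_def by simp
    then have pb': "real (2 * c0 + 4 * n * D) \<le> real (4 ^ n)" by (simp only: of_nat_le_iff)
    have "frake n = exp 1 ^ n" unfolding frake_def using exp_of_nat_mult[of n 1] by simp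
    also have "\<dots> \<le> 3 ^ n" using exp_le by (intro power_mono) auto
    also have "\<dots> \<le> (4::real) ^ n" by (intro power_mono) auto
    also have "\<dots> = real (4 ^ n)" by simp
    finally have "frake n \<le> real (4 ^ n)" .
    then show ?thesis using h' pb' by simp
  qed
  have P1: "fle frake (hfun L \<psi>)" unfolding fle_def
    using main by (intro exI[of _ N0] exI[of _ 2] exI[of _ MM]) (auto simp: MM_def)
  have P2: "\<not> fle (hfun L \<psi>) f" if "classF f \<and> fless f frake" for f
  proof
    assume "fle (hfun L \<psi>) f"
    then have "fle frake f" using fle_trans P1 by blast
    then show False using that by (simp add: fless_def)
  qed
  show ?thesis using P1 P2 by blast
qed


end
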